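(* Let $\mu\in(0,1)$ and $\alpha>0$. Then there exists $K>0$ such that for all $\tau\ge0$, $$\int_0^1\int_0^\tau\mu\frac{e^{(\mu-\alpha)\tau'}}{(e^{-\tau'}+b)^{\mu+\alpha}(1-b)^{1-\mu}}\,d\tau'\,db\le\begin{cases}K\int_0^\tau e^{(\mu-\alpha)\tau'}d\tau',&\alpha<1-\mu,\\ K\int_0^\tau e^{(2\mu-1)\tau'}d\tau',&\alpha>1-\mu,\\ K\int_0^\tau(1+\tau')e^{(2\mu-1)\tau'}d\tau',&\alpha=1-\mu.\end{cases}$$ *)

theory Defs
  imports "HOL-Analysis.Analysis"
begin

end

theory Submission
  imports Defs
begin

lemma ftc_powr:
  fixes e s :: real
  assumes e: "e > 0" and s: "s \<noteq> 1"
  shows "((\<lambda>b. (e + b) powr (- s)) has_integral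
          ((e + 1) powr (1 - s) / (1 - s) - (e + 0) powr (1 - s) / (1 - s))) {0..1}"
proof -
  have "((\<lambda>b. (e + b) powr (1 - s) / (1 - s)) has_vector_derivative (e + x) powr (- s))
          (at x within {0..1})" if "x \<in> {0..1}" for x
  proof -
    have "((\<lambda>b. (e + b) powr (1 - s) / (1 - s)) has_real_derivative
            ((1 - s) * (e + x) powr (1 - s - 1) * 1) / (1 - s)) (at x)"
      using that e by (auto intro!: derivative_eq_intros)
    moreover have "((1 - s) * (e + x) powr (1 - s - 1) * 1) / (1 - s) = (e + x) powr (- s)"
      using s by simp
    ultimately show ?thesis
      by (simp add: has_real_derivative_iff_has_vector_derivative[symmetric] has_field_derivative_at_within)
  qed
  from fundamental_theorem_of_calculus[OF _ this] show ?thesis by simp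
qed

lemma ftc_inv:
  fixes e :: real
  assumes e: "e > 0"
  shows "((\<lambda>b. (e + b) powr (- 1)) has_integral (ln (e + 1) - ln (e + 0))) {0..1}"
proof -
  have "((\<lambda>b. ln (e + b)) has_vector_derivative (e + x) powr (- 1))
          (at x within {0..1})" if "x \<in> {0..1}" for x
  proof -
    have "((\<lambda>b. ln (e + b)) has_real_derivative 1 / (e + x)) (at x)"
      using that e by (auto intro!: derivative_eq_intros)
    moreover have "1 / (e + x) = (e + x) powr (- 1)"
      using that e by (simp add: powr_minus divide_inverse)
    ultimately show ?thesis
      by (simp add: has_real_derivative_iff_has_vector_derivative[symmetric] has_field_derivative_at_within)
  qed
  from fundamental_theorem_of_calculus[OF _ this] show ?thesis by simp
qed

lemma int_one_minus:
  fixes m :: real assumes "0 < m"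
  shows "((\<lambda>b. (1 - b) powr (m - 1)) has_integral 1 / m) {0..1}"
proof -
  have "((\<lambda>x. x powr (m - 1)) has_integral (1 powr (m - 1 + 1) / (m - 1 + 1))) {0..1}"
    using assms by (intro has_integral_powr_from_0) auto
  hence "((\<lambda>x. x powr (m - 1)) has_integral 1 / m) {0..1}" by simp
  hence "(((\<lambda>x. x powr (m - 1)) \<circ> (+) 1) has_integral 1 / m) {-1..0}"
    using has_integral_shift_Icc_real[of "\<lambda>x. x powr (m - 1)" 1 "1/m" "-1" 0] by simp
  hence "((\<lambda>x. (1 + x) powr (m - 1)) has_integral 1 / m) {-1..0}"
    by (simp add: o_def)
  hence "((\<lambda>x. (1 + - x) powr (m - 1)) has_integral 1 / m) {-0..- (-1)}"
    by (subst has_integral_reflect_real) 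
  thus ?thesis by simp
qed

lemma final_conv:
  fixes g :: "real \<Rightarrow> real" and K \<tau> :: real
  assumes "0 \<le> \<tau>" "continuous_on {0..\<tau>} g" "\<And>t. t \<in> {0..\<tau>} \<Longrightarrow> 0 \<le> g t" "0 \<le> K"
  shows "(\<integral>\<^sup>+ t. ennreal (K * g t) * indicator {0..\<tau>} t \<partial>lborel) = ennreal (K * (LBINT t=0..\<tau>. g t))"
proof -
  have "g integrable_on {0..\<tau>}" using assms(2) by (rule integrable_continuous_interval)
  hence "((\<lambda>t. K * g t) has_integral K * integral {0..\<tau>} g) {0..\<tau>}"
    by (intro has_integral_mult_right) (simp add: integrable_integral)
  hence 1: "(\<integral>\<^sup>+ t. ennreal (K * g t) * indicator {0..\<tau>} t \<partial>lborel) = ennreal (K * integral {0..\<tau>} g)"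
    using assms by (intro nn_integral_has_integral_lebesgue') auto
  have si: "set_integrable lborel {0..\<tau>} g"
    unfolding set_integrable_def using assms(2) by (intro borel_integrable_compact) auto
  have "(LBINT t=0..\<tau>. g t) = (LBINT t:{0..\<tau>}. g t)"
    using interval_integral_Icc[of 0 \<tau> g] assms(1) by (simp add: zero_ereal_def)
  also have "\<dots> = integral {0..\<tau>} g" using set_borel_integral_eq_integral(2)[OF si] .
  finally show ?thesis using 1 by simp
qed

lemma nnA:
  fixes e s :: real
  assumes e: "e > 0" and s: "s \<noteq> 1"
  shows "(\<integral>\<^sup>+ b. ennreal ((e + b) powr (- s)) * indicator {0..1} b \<partial>lborel) =
          ennreal ((e + 1) powr (1 - s) / (1 - s) - (e + 0) powr (1 - s) / (1 - s))"
  using ftc_powr[OF e s] e by (intro nn_integral_has_integral_lebesgue') auto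

lemma nnA1:
  fixes e :: real
  assumes e: "e > 0"
  shows "(\<integral>\<^sup>+ b. ennreal ((e + b) powr (- 1)) * indicator {0..1} b \<partial>lborel) =
          ennreal (ln (e + 1) - ln (e + 0))"
  using ftc_inv[OF e] e by (intro nn_integral_has_integral_lebesgue') auto

lemma nnB:
  fixes m :: real assumes "0 < m"
  shows "(\<integral>\<^sup>+ b. ennreal ((1 - b) powr (m - 1)) * indicator {0..1} b \<partial>lborel) = ennreal (1 / m)"
  using int_one_minus[OF assms] by (intro nn_integral_has_integral_lebesgue') auto

lemma pointwise:
  fixes \<mu> \<alpha> b t :: real
  assumes "0 < \<mu>" "\<mu> < 1" "0 < \<alpha>" "b \<in> {0..1}"
  shows "\<mu> * exp ((\<mu> - \<alpha>) * t) / ((exp (- t) + b) powr (\<mu> + \<alpha>) * (1 - b) powr (1 - \<mu>))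
     \<le> \<mu> * exp ((\<mu> - \<alpha>) * t) * (2 powr (1 - \<mu>) * (exp (- t) + b) powr (- (\<mu> + \<alpha>)))
       + \<mu> * exp ((\<mu> - \<alpha>) * t) * (2 powr (\<mu> + \<alpha>) * (1 - b) powr (\<mu> - 1))"
proof (cases "b = 1")
  case True
  thus ?thesis using assms by (simp add: add_nonneg_nonneg)
next
  case False
  hence b: "0 \<le> b" "b < 1" using assms by auto
  define P where "P = (exp (- t) + b) powr (- (\<mu> + \<alpha>))"
  define Q where "Q = (1 - b) powr (\<mu> - 1)"
  have pos: "exp (- t) + b > 0" using b by (simp add: add_pos_nonneg)
  have P0: "P \<ge> 0" "Q \<ge> 0" unfolding P_def Q_def by auto
  have "1 / ((exp (- t) + b) powr (\<mu> + \<alpha>) * (1 - b) powr (1 - \<mu>)) = P * Q"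
  proof -
    have "(1 - b) powr (\<mu> - 1) = inverse ((1 - b) powr (1 - \<mu>))"
      using b by (simp add: powr_minus[symmetric])
    moreover have "(exp (- t) + b) powr (- (\<mu> + \<alpha>)) = inverse ((exp (- t) + b) powr (\<mu> + \<alpha>))"
      by (rule powr_minus)
    ultimately show ?thesis unfolding P_def Q_def by (simp add: divide_inverse)
  qed
  moreover have "P * Q \<le> 2 powr (1 - \<mu>) * P + 2 powr (\<mu> + \<alpha>) * Q"
  proof (cases "b \<le> 1/2")
    case True
    have "Q \<le> (1/2) powr (\<mu> - 1)" unfolding Q_def
      using True assms by (intro powr_mono2') auto
    also have "\<dots> = 2 powr (- (\<mu> - 1))" by (simp only: powr_divide powr_minus_divide) simp
    also have "\<dots> = 2 powr (1 - \<mu>)" by simp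
    finally have "P * Q \<le> 2 powr (1 - \<mu>) * P" using P0 by (simp add: mult_left_mono mult.commute)
    thus ?thesis using P0 by (simp add: add_increasing2)
  next
    case False
    have "P \<le> (1/2) powr (- (\<mu> + \<alpha>))" unfolding P_def
    proof (intro powr_mono2')
      have "exp (- t) > 0" by simp
      thus "1/2 \<le> exp (- t) + b" using False by linarith
    qed (use assms in auto)
    also have "\<dots> = 2 powr (\<mu> + \<alpha>)" by (simp only: powr_divide powr_minus_divide) simp
    finally have "P * Q \<le> 2 powr (\<mu> + \<alpha>) * Q" using P0 by (simp add: mult_right_mono)
    thus ?thesis using P0 by (simp add: add_increasing)
  qed
  ultimately have "1 / ((exp (- t) + b) powr (\<mu> + \<alpha>) * (1 - b) powr (1 - \<mu>)) \<le> 2 powr (1 - \<mu>) * P + 2 powr (\<mu> + \<alpha>) * Q"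
    by simp
  hence "\<mu> * exp ((\<mu> - \<alpha>) * t) * (1 / ((exp (- t) + b) powr (\<mu> + \<alpha>) * (1 - b) powr (1 - \<mu>)))
     \<le> \<mu> * exp ((\<mu> - \<alpha>) * t) * (2 powr (1 - \<mu>) * P + 2 powr (\<mu> + \<alpha>) * Q)"
    using assms by (intro mult_left_mono) auto
  thus ?thesis unfolding P_def Q_def by (simp add: algebra_simps)
qed

lemma main:
  fixes \<mu> \<alpha> c \<tau> :: real and w :: "real \<Rightarrow> real"
  assumes m: "0 < \<mu>" "\<mu> < 1" "0 < \<alpha>" and c: "0 \<le> c"
    and A: "\<And>t. t \<ge> 0 \<Longrightarrow> (\<integral>\<^sup>+ b. ennreal ((exp (- t) + b) powr (- (\<mu> + \<alpha>))) * indicator {0..1} b \<partial>lborel) \<le> ennreal (c * w t)"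
    and w1: "\<And>t. t \<ge> 0 \<Longrightarrow> 1 \<le> w t" and wc: "continuous_on {0..} w"
    and tau: "0 \<le> \<tau>"
  shows "(\<integral>\<^sup>+ b \<in> {0..1}. (\<integral>\<^sup>+ t \<in> {0..\<tau>}.
        ennreal (\<mu> * exp ((\<mu> - \<alpha>) * t) /
          ((exp (- t) + b) powr (\<mu> + \<alpha>) * (1 - b) powr (1 - \<mu>))) \<partial>lborel) \<partial>lborel)
    \<le> ennreal ((\<mu> * (2 powr (1 - \<mu>) * c + 2 powr (\<mu> + \<alpha>) / \<mu>)) * (LBINT t=0..\<tau>. exp ((\<mu> - \<alpha>) * t) * w t))"
proof -
  define K where "K = \<mu> * (2 powr (1 - \<mu>) * c + 2 powr (\<mu> + \<alpha>) / \<mu>)"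
  have K0: "0 \<le> K" unfolding K_def using m c by auto
  define G where "G = (\<lambda>b t. \<mu> * exp ((\<mu> - \<alpha>) * t) * (2 powr (1 - \<mu>) * (exp (- t) + b) powr (- (\<mu> + \<alpha>)))
       + \<mu> * exp ((\<mu> - \<alpha>) * t) * (2 powr (\<mu> + \<alpha>) * (1 - b) powr (\<mu> - 1)))"
  have Gm: "(\<lambda>(b, t). ennreal (G b t) * indicator {0..\<tau>} t * indicator {0..1} b) \<in> borel_measurable (lborel \<Otimes>\<^sub>M lborel)"
    unfolding G_def by measurable
  have step1: "(\<integral>\<^sup>+ b \<in> {0..1}. (\<integral>\<^sup>+ t \<in> {0..\<tau>}.
        ennreal (\<mu> * exp ((\<mu> - \<alpha>) * t) /
          ((exp (- t) + b) powr (\<mu> + \<alpha>) * (1 - b) powr (1 - \<mu>))) \<partial>lborel) \<partial>lborel)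
     \<le> (\<integral>\<^sup>+ b. (\<integral>\<^sup>+ t. ennreal (G b t) * indicator {0..\<tau>} t * indicator {0..1} b \<partial>lborel) \<partial>lborel)"
  proof (intro nn_integral_mono)
    fix b :: real
    show "(\<integral>\<^sup>+ t \<in> {0..\<tau>}.
        ennreal (\<mu> * exp ((\<mu> - \<alpha>) * t) /
          ((exp (- t) + b) powr (\<mu> + \<alpha>) * (1 - b) powr (1 - \<mu>))) \<partial>lborel) * indicator {0..1} b
       \<le> (\<integral>\<^sup>+ t. ennreal (G b t) * indicator {0..\<tau>} t * indicator {0..1} b \<partial>lborel)"
    proof (cases "b \<in> {0..1}")
      case True
      have "\<And>t. ennreal (\<mu> * exp ((\<mu> - \<alpha>) * t) /
          ((exp (- t) + b) powr (\<mu> + \<alpha>) * (1 - b) powr (1 - \<mu>))) \<le> ennreal (G b t)"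
        unfolding G_def by (intro ennreal_leI pointwise[OF m True])
      thus ?thesis using True
        by (auto intro!: nn_integral_mono mult_right_mono split: split_indicator)
    qed simp
  qed
  also have "\<dots> = (\<integral>\<^sup>+ t. (\<integral>\<^sup>+ b. ennreal (G b t) * indicator {0..\<tau>} t * indicator {0..1} b \<partial>lborel) \<partial>lborel)"
    using lborel_pair.Fubini'[OF Gm] by simp
  also have "\<dots> \<le> (\<integral>\<^sup>+ t. ennreal (K * (exp ((\<mu> - \<alpha>) * t) * w t)) * indicator {0..\<tau>} t \<partial>lborel)"
  proof (intro nn_integral_mono)
    fix t :: real
    show "(\<integral>\<^sup>+ b. ennreal (G b t) * indicator {0..\<tau>} t * indicator {0..1} b \<partial>lborel)
       \<le> ennreal (K * (exp ((\<mu> - \<alpha>) * t) * w t)) * indicator {0..\<tau>} t"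
    proof (cases "t \<in> {0..\<tau>}")
      case True
      hence t0: "0 \<le> t" by auto
      define E where "E = exp ((\<mu> - \<alpha>) * t)"
      have E0: "E > 0" unfolding E_def by simp
      define a1 where "a1 = \<mu> * E * 2 powr (1 - \<mu>)"
      define a2 where "a2 = \<mu> * E * 2 powr (\<mu> + \<alpha>)"
      have a0: "0 \<le> a1" "0 \<le> a2" unfolding a1_def a2_def using m E0 by auto
      have "(\<integral>\<^sup>+ b. ennreal (G b t) * indicator {0..\<tau>} t * indicator {0..1} b \<partial>lborel)
          = (\<integral>\<^sup>+ b. ennreal a1 * (ennreal ((exp (- t) + b) powr (- (\<mu> + \<alpha>))) * indicator {0..1} b)
                + ennreal a2 * (ennreal ((1 - b) powr (\<mu> - 1)) * indicator {0..1} b) \<partial>lborel)"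
      proof (intro nn_integral_cong)
        fix b :: real
        have eq: "G b t = a1 * (exp (- t) + b) powr (- (\<mu> + \<alpha>)) + a2 * (1 - b) powr (\<mu> - 1)"
          unfolding G_def a1_def a2_def E_def by (simp add: algebra_simps)
        have "ennreal (G b t) = ennreal a1 * ennreal ((exp (- t) + b) powr (- (\<mu> + \<alpha>))) + ennreal a2 * ennreal ((1 - b) powr (\<mu> - 1))"
          unfolding eq using a0 by (simp add: ennreal_plus ennreal_mult)
        thus "ennreal (G b t) * indicator {0..\<tau>} t * indicator {0..1} b =
           ennreal a1 * (ennreal ((exp (- t) + b) powr (- (\<mu> + \<alpha>))) * indicator {0..1} b)
                + ennreal a2 * (ennreal ((1 - b) powr (\<mu> - 1)) * indicator {0..1} b)"
          using True by (simp add: algebra_simps split: split_indicator)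
      qed
      also have "\<dots> = ennreal a1 * (\<integral>\<^sup>+ b. ennreal ((exp (- t) + b) powr (- (\<mu> + \<alpha>))) * indicator {0..1} b \<partial>lborel)
                 + ennreal a2 * (\<integral>\<^sup>+ b. ennreal ((1 - b) powr (\<mu> - 1)) * indicator {0..1} b \<partial>lborel)"
        by (subst nn_integral_add) (auto simp: nn_integral_cmult)
      also have "\<dots> \<le> ennreal a1 * ennreal (c * w t) + ennreal a2 * ennreal (1 / \<mu>)"
        using A[OF t0] nnB[OF m(1)] by (intro add_mono mult_left_mono) auto
      also have "\<dots> = ennreal (a1 * (c * w t) + a2 * (1 / \<mu>))"
      proof -
        have "0 \<le> a1 * (c * w t)" using a0 c w1[OF t0] by simp
        moreover have "0 \<le> a2 * (1 / \<mu>)" using a0 m by simp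
        ultimately have "ennreal (a1 * (c * w t) + a2 * (1 / \<mu>)) = ennreal (a1 * (c * w t)) + ennreal (a2 * (1 / \<mu>))"
          by (rule ennreal_plus)
        also have "\<dots> = ennreal a1 * ennreal (c * w t) + ennreal a2 * ennreal (1 / \<mu>)"
        proof -
          have "0 \<le> c * w t" using c w1[OF t0] by simp
          moreover have "0 \<le> 1 / \<mu>" using m by simp
          ultimately show ?thesis by (simp only: ennreal_mult[OF a0(1)] ennreal_mult[OF a0(2)])
        qed
        finally show ?thesis by (rule sym)
      qed
      also have "\<dots> \<le> ennreal (K * (E * w t))"
      proof (intro ennreal_leI)
        have "a2 * (1 / \<mu>) \<le> a2 * (1 / \<mu>) * w t"
          using mult_left_mono[OF w1[OF t0], of "a2 * (1 / \<mu>)"] a0 m by simp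
        hence "a1 * (c * w t) + a2 * (1 / \<mu>) \<le> a1 * (c * w t) + a2 * (1 / \<mu>) * w t" by simp
        also have "\<dots> = K * (E * w t)" unfolding K_def a1_def a2_def using m by (simp add: field_simps)
        finally show "a1 * (c * w t) + a2 * (1 / \<mu>) \<le> K * (E * w t)" .
      qed
      finally show ?thesis using True by (simp add: E_def)
    qed simp
  qed
  also have "\<dots> = ennreal (K * (LBINT t=0..\<tau>. exp ((\<mu> - \<alpha>) * t) * w t))"
    using tau K0 w1 continuous_on_subset[OF wc, of "{0..\<tau>}"]
  proof (intro final_conv)
    show "continuous_on {0..\<tau>} (\<lambda>t. exp ((\<mu> - \<alpha>) * t) * w t)"
      using continuous_on_subset[OF wc, of "{0..\<tau>}"] by (auto intro!: continuous_intros)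
    fix t assume "t \<in> {0..\<tau>}"
    hence "1 \<le> w t" using w1 by auto
    thus "0 \<le> exp ((\<mu> - \<alpha>) * t) * w t" by simp
  qed (use tau K0 in auto)
  finally show ?thesis unfolding K_def .
qed

lemma Kpos: "0 < \<mu> \<Longrightarrow> 0 \<le> c \<Longrightarrow> 0 < \<mu> * (2 powr (1 - \<mu>) * c + 2 powr (\<mu> + \<alpha>) / \<mu>)"
  for \<mu> \<alpha> c :: real
  by (intro mult_pos_pos add_nonneg_pos) auto

lemma caseA_lt:
  fixes s t :: real assumes s: "0 < s" "s < 1" and t: "0 \<le> t"
  shows "(\<integral>\<^sup>+ b. ennreal ((exp (- t) + b) powr (- s)) * indicator {0..1} b \<partial>lborel) \<le> ennreal ((2 powr (1 - s) / (1 - s)) * 1)"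
proof -
  have e: "exp (- t) > 0" "exp (- t) \<le> 1" using t by auto
  have "(exp (- t) + 1) powr (1 - s) \<le> 2 powr (1 - s)"
    using e s by (intro powr_mono2) auto
  hence "(exp (- t) + 1) powr (1 - s) / (1 - s) - (exp (- t) + 0) powr (1 - s) / (1 - s) \<le> 2 powr (1 - s) / (1 - s)"
    using s by (smt (verit) divide_nonneg_pos divide_right_mono powr_ge_zero)
  thus ?thesis using nnA[OF e(1), of s] s by (simp add: ennreal_leI)
qed

lemma div_flip: "s \<noteq> (1::real) \<Longrightarrow> y / (1 - s) - x / (1 - s) = (x - y) / (s - 1)"
proof -
  assume "s \<noteq> 1"
  have "y / (1 - s) - x / (1 - s) = (y - x) / (1 - s)" by (simp add: diff_divide_distrib)
  also have "\<dots> = (- (x - y)) / (- (s - 1))" by simp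
  also have "\<dots> = (x - y) / (s - 1)" by (rule minus_divide_divide)
  finally show ?thesis .
qed

lemma caseA_gt:
  fixes s t :: real assumes s: "1 < s" and t: "0 \<le> t"
  shows "(\<integral>\<^sup>+ b. ennreal ((exp (- t) + b) powr (- s)) * indicator {0..1} b \<partial>lborel) \<le> ennreal ((1 / (s - 1)) * exp ((s - 1) * t))"
proof -
  have e: "exp (- t) > 0" using t by auto
  have eq: "exp (- t) powr (1 - s) = exp ((s - 1) * t)" by (simp add: powr_def algebra_simps)
  have "(exp (- t) + 1) powr (1 - s) / (1 - s) - (exp (- t) + 0) powr (1 - s) / (1 - s)
      = (exp (- t) powr (1 - s) - (exp (- t) + 1) powr (1 - s)) / (s - 1)"
    using s div_flip[of s] by simp
  also have "\<dots> \<le> exp (- t) powr (1 - s) / (s - 1)"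
    using s by (intro divide_right_mono) auto
  finally have "(exp (- t) + 1) powr (1 - s) / (1 - s) - (exp (- t) + 0) powr (1 - s) / (1 - s) \<le> (1 / (s - 1)) * exp ((s - 1) * t)"
    using eq by simp
  thus ?thesis using nnA[OF e, of s] s by (simp add: ennreal_leI)
qed

lemma caseA_eq:
  fixes t :: real assumes t: "0 \<le> t"
  shows "(\<integral>\<^sup>+ b. ennreal ((exp (- t) + b) powr (- 1)) * indicator {0..1} b \<partial>lborel) \<le> ennreal (1 * (1 + t))"
proof -
  have e: "exp (- t) > 0" "exp (- t) \<le> 1" using t by auto
  have "ln (exp (- t) + 1) \<le> exp (- t)"
    using ln_add_one_self_le_self[of "exp (- t)"] by (simp add: add.commute)
  moreover have "ln (exp (- t) + 0) = - t" by simp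
  ultimately have "ln (exp (- t) + 1) - ln (exp (- t) + 0) \<le> 1 + t" using e by linarith
  hence "ln (exp (- t) + 1) - ln (exp (- t) + 0) \<le> 1 * (1 + t)" by simp
  thus ?thesis using nnA1[OF e(1)] by (simp add: ennreal_leI)
qed

theorem lemma9:
  fixes \<mu> \<alpha> :: real
  assumes "0 < \<mu>" "\<mu> < 1" "0 < \<alpha>"
  shows "\<exists>K>0. \<forall>\<tau>\<ge>0.
    (\<integral>\<^sup>+ b \<in> {0..1}. (\<integral>\<^sup>+ t \<in> {0..\<tau>}.
        ennreal (\<mu> * exp ((\<mu> - \<alpha>) * t) /
          ((exp (- t) + b) powr (\<mu> + \<alpha>) * (1 - b) powr (1 - \<mu>))) \<partial>lborel) \<partial>lborel)
    \<le> ennreal (if \<alpha> < 1 - \<mu> then K * (LBINT t=0..\<tau>. exp ((\<mu> - \<alpha>) * t))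
               else if \<alpha> > 1 - \<mu> then K * (LBINT t=0..\<tau>. exp ((2 * \<mu> - 1) * t))
               else K * (LBINT t=0..\<tau>. (1 + t) * exp ((2 * \<mu> - 1) * t)))"
proof -
  note m = assms
  consider (lt) "\<alpha> < 1 - \<mu>" | (gt) "\<alpha> > 1 - \<mu>" | (eq) "\<alpha> = 1 - \<mu>" by linarith
  thus ?thesis
  proof cases
    case lt
    define c where "c = 2 powr (1 - (\<mu> + \<alpha>)) / (1 - (\<mu> + \<alpha>))"
    have c0: "0 \<le> c" unfolding c_def using lt by auto
    have A: "\<And>t. 0 \<le> t \<Longrightarrow> (\<integral>\<^sup>+ b. ennreal ((exp (- t) + b) powr (- (\<mu> + \<alpha>))) * indicator {0..1} b \<partial>lborel) \<le> ennreal (c * (\<lambda>_. 1) t)"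
      unfolding c_def using caseA_lt[of "\<mu> + \<alpha>"] lt m by simp
    show ?thesis
      apply (rule exI[of _ "\<mu> * (2 powr (1 - \<mu>) * c + 2 powr (\<mu> + \<alpha>) / \<mu>)"])
      apply (intro conjI allI impI)
      subgoal using Kpos m c0 by blast
      subgoal for \<tau> using main[OF m c0 A _ _ , of "\<tau>"] lt by simp
      done
  next
    case gt
    define c where "c = 1 / (\<mu> + \<alpha> - 1)"
    have c0: "0 \<le> c" unfolding c_def using gt by auto
    define w where "w = (\<lambda>t::real. exp ((\<mu> + \<alpha> - 1) * t))"
    have A: "\<And>t. 0 \<le> t \<Longrightarrow> (\<integral>\<^sup>+ b. ennreal ((exp (- t) + b) powr (- (\<mu> + \<alpha>))) * indicator {0..1} b \<partial>lborel) \<le> ennreal (c * w t)"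
      unfolding c_def w_def using caseA_gt[of "\<mu> + \<alpha>"] gt m by simp
    have w1: "\<And>t. 0 \<le> t \<Longrightarrow> 1 \<le> w t" unfolding w_def using gt by auto
    have wc: "continuous_on {0..} w" unfolding w_def by (intro continuous_intros)
    have eqf: "(\<lambda>t. exp ((\<mu> - \<alpha>) * t) * w t) = (\<lambda>t. exp ((2 * \<mu> - 1) * t))"
      unfolding w_def by (rule ext) (simp add: exp_add[symmetric] algebra_simps)
    show ?thesis
      apply (rule exI[of _ "\<mu> * (2 powr (1 - \<mu>) * c + 2 powr (\<mu> + \<alpha>) / \<mu>)"])
      apply (intro conjI allI impI)
      subgoal using Kpos m c0 by blast
      subgoal for \<tau> using main[OF m c0 A w1 wc, of "\<tau>"] gt unfolding eqf by simp
      done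
  next
    case eq
    define w where "w = (\<lambda>t::real. 1 + t)"
    have A: "\<And>t. 0 \<le> t \<Longrightarrow> (\<integral>\<^sup>+ b. ennreal ((exp (- t) + b) powr (- (\<mu> + \<alpha>))) * indicator {0..1} b \<partial>lborel) \<le> ennreal (1 * w t)"
      unfolding w_def using caseA_eq eq by simp
    have w1: "\<And>t. 0 \<le> t \<Longrightarrow> 1 \<le> w t" unfolding w_def by auto
    have wc: "continuous_on {0..} w" unfolding w_def by (intro continuous_intros)
    have eqf: "(\<lambda>t. exp ((\<mu> - \<alpha>) * t) * w t) = (\<lambda>t. (1 + t) * exp ((2 * \<mu> - 1) * t))"
    proof -
      have e: "\<mu> - \<alpha> = 2 * \<mu> - 1" using eq by simp
      show ?thesis unfolding w_def e by (simp add: mult.commute)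
    qed
    have c0: "(0::real) \<le> 1" by simp
    show ?thesis
      apply (rule exI[of _ "\<mu> * (2 powr (1 - \<mu>) * 1 + 2 powr (\<mu> + \<alpha>) / \<mu>)"])
      apply (intro conjI allI impI)
      subgoal using Kpos m c0 by blast
      subgoal for \<tau> using main[OF m c0 A w1 wc, of "\<tau>"] eq unfolding eqf by simp
      done
  qed
qed

end
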